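(* For $i,k\in\{1,2,3\}$ with $i\neq k$ and $l\in\{1,2\}$ let $h_{i,k}^{(l)}\in\mathbb{C}\setminus\{0\}$ and let $\mathbf{H}_{i,k}=\mathrm{diag}\big(h_{i,k}^{(1)},h_{i,k}^{(2)}\big)$. Suppose $$\frac{h_{1,2}^{(2)}}{h_{1,2}^{(1)}}\frac{h_{1,3}^{(1)}}{h_{1,3}^{(2)}}\frac{h_{2,3}^{(2)}}{h_{2,3}^{(1)}}\frac{h_{2,1}^{(1)}}{h_{2,1}^{(2)}}\frac{h_{3,1}^{(2)}}{h_{3,1}^{(1)}}\frac{h_{3,2}^{(1)}}{h_{3,2}^{(2)}}=1.$$ Then interference alignment is feasible: there exist vectors $\mathbf{u}_1,\mathbf{u}_2,\mathbf{u}_3,\mathbf{v}_1,\mathbf{v}_2,\mathbf{v}_3\in\mathbb{C}^2$, all of whose entries are nonzero, such that $\mathbf{u}_i^{\dagger}\mathbf{H}_{i,k}\mathbf{v}_k=0$ for all $i\neq k$ in $\{1,2,3\}$.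
   Context: Setting: three transmitter–receiver pairs, each node with a single antenna, all using the same two orthogonal subcarriers, each transmitter sending one stream (three streams over two subcarriers in total). $h_{i,k}^{(l)}$ is the channel coefficient on subcarrier $l$ from transmitter $k$ to receiver $i$ (cross channels for $i\ne k$), $\mathbf{v}_k$ is the precoding vector of transmitter $k$, $\mathbf{u}_i$ the receive filter of receiver $i$, and $\mathbf{u}^\dagger$ denotes conjugate transpose. Interference alignment means the interference from every other transmitter is nulled by each receive filter, i.e. $\mathbf{u}_i^{\dagger}\mathbf{H}_{i,k}\mathbf{v}_k=0$ for $i\neq k$. *)

theory Defs
  imports "HOL-Analysis.Analysis"
begin

text \<open>Channels: h i k l is the coefficient on subcarrier l (l in {1,2}) from transmitter k
to receiver i. Vectors in C^2 are represented as functions nat => complex, entries indexed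
by l in {1,2}.\<close>

definition chanmat :: "(nat \<Rightarrow> nat \<Rightarrow> nat \<Rightarrow> complex) \<Rightarrow> nat \<Rightarrow> nat \<Rightarrow> nat \<Rightarrow> nat \<Rightarrow> complex" where
  "chanmat h i k a b = (if a = b then h i k a else 0)"

definition sesq :: "(nat \<Rightarrow> complex) \<Rightarrow> (nat \<Rightarrow> nat \<Rightarrow> complex) \<Rightarrow> (nat \<Rightarrow> complex) \<Rightarrow> complex" where
  "sesq u M v = (\<Sum>a\<in>{1,2}. \<Sum>b\<in>{1,2}. cnj (u a) * M a b * v b)"

end

theory Submission
  imports Defs
begin

lemma key:
  assumes "h i k 2 \<noteq> 0" "a * b = - h i k 1 / h i k 2"
  shows "sesq (\<lambda>l. if l = 1 then 1 else cnj a) (chanmat h i k) (\<lambda>l. if l = 1 then 1 else b) = 0"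
proof -
  have "h i k 1 + a * h i k 2 * b = 0"
  proof -
    have "a * h i k 2 * b = (a*b) * h i k 2" by simp
    also have "\<dots> = - h i k 1" using assms by simp
    finally show ?thesis by simp
  qed
  then show ?thesis by (simp add: sesq_def chanmat_def)
qed

theorem theorem1:
  fixes h :: "nat \<Rightarrow> nat \<Rightarrow> nat \<Rightarrow> complex"
  assumes nz: "\<And>i k l. i \<in> {1,2,3} \<Longrightarrow> k \<in> {1,2,3} \<Longrightarrow> i \<noteq> k \<Longrightarrow> l \<in> {1,2} \<Longrightarrow> h i k l \<noteq> 0"
    and cond: "(h 1 2 2 / h 1 2 1) * (h 1 3 1 / h 1 3 2) * (h 2 3 2 / h 2 3 1)
             * (h 2 1 1 / h 2 1 2) * (h 3 1 2 / h 3 1 1) * (h 3 2 1 / h 3 2 2) = 1"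
  shows "\<exists>u v :: nat \<Rightarrow> nat \<Rightarrow> complex.
           (\<forall>i\<in>{1,2,3}. \<forall>l\<in>{1,2}. u i l \<noteq> 0 \<and> v i l \<noteq> 0) \<and>
           (\<forall>i\<in>{1,2,3}. \<forall>k\<in>{1,2,3}. i \<noteq> k \<longrightarrow> sesq (u i) (chanmat h i k) (v k) = 0)"
proof -
  define r where "r i k = - h i k 1 / h i k 2" for i k
  have n: "h 1 2 1 \<noteq> 0" "h 1 2 2 \<noteq> 0" "h 1 3 1 \<noteq> 0" "h 1 3 2 \<noteq> 0"
          "h 2 1 1 \<noteq> 0" "h 2 1 2 \<noteq> 0" "h 2 3 1 \<noteq> 0" "h 2 3 2 \<noteq> 0"
          "h 3 1 1 \<noteq> 0" "h 3 1 2 \<noteq> 0" "h 3 2 1 \<noteq> 0" "h 3 2 2 \<noteq> 0"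
    by (simp_all add: nz)
  have rn: "r 1 2 \<noteq> 0" "r 1 3 \<noteq> 0" "r 2 1 \<noteq> 0" "r 2 3 \<noteq> 0" "r 3 1 \<noteq> 0" "r 3 2 \<noteq> 0"
    using n by (auto simp: r_def)
  have c: "r 1 2 * r 3 1 * r 2 3 = r 1 3 * r 3 2 * r 2 1"
    using cond n unfolding r_def by (simp add: field_simps)
  define A where "A i = (if i = (1::nat) then r 1 2 * r 3 1 / r 3 2 else if i = 2 then r 2 1 else r 3 1)" for i
  define B where "B k = (if k = (1::nat) then 1 else if k = 2 then r 3 2 / r 3 1 else r 2 3 / r 2 1)" for k
  define u where "u i = (\<lambda>l::nat. if l = 1 then 1 else cnj (A i))" for i
  define v where "v k = (\<lambda>l::nat. if l = 1 then 1 else B k)" for k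
  have An: "A i \<noteq> 0" for i using rn by (simp add: A_def)
  have Bn: "B k \<noteq> 0" for k using rn by (simp add: B_def)
  have e12: "A 1 * B 2 = r 1 2" using rn by (simp add: A_def B_def)
  have e13: "A 1 * B 3 = r 1 3"
  proof -
    have "A 1 * B 3 = (r 1 2 * r 3 1 * r 2 3) / (r 3 2 * r 2 1)" by (simp add: A_def B_def)
    also have "\<dots> = r 1 3" using c rn by (simp add: field_simps)
    finally show ?thesis .
  qed
  have e21: "A 2 * B 1 = r 2 1" by (simp add: A_def B_def)
  have e23: "A 2 * B 3 = r 2 3" using rn by (simp add: A_def B_def)
  have e31: "A 3 * B 1 = r 3 1" by (simp add: A_def B_def)
  have e32: "A 3 * B 2 = r 3 2" using rn by (simp add: A_def B_def)
  have s: "sesq (u i) (chanmat h i k) (v k) = 0" if "h i k 2 \<noteq> 0" "A i * B k = r i k" for i k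
    unfolding u_def v_def using key[of h i k "A i" "B k"] that by (simp add: r_def)
  show ?thesis
    apply (rule exI[of _ u], rule exI[of _ v])
    using An Bn s[OF _ e12] s[OF _ e13] s[OF _ e21] s[OF _ e23] s[OF _ e31] s[OF _ e32] n
    by (auto simp: u_def v_def)
qed

end
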